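(* Let $\rho:\pi^*\to\mathbf U_n$ be a homomorphism and $\gamma\in\mathbf{SU}_n$, written up to conjugacy as $\gamma=\mathrm{diag}(e^{2\pi i\gamma_1},\dots,e^{2\pi i\gamma_n})$ with $0\le\gamma_j<1$. Then $\gamma$ is conjugate to $\widetilde\Psi(\rho)$ for some reducible $\rho$ if and only if there is a proper nonempty subcollection $\gamma_{\sigma(1)},\dots,\gamma_{\sigma(n_1)}$ ($1\le n_1<n$) with $\sum_{j=1}^{n_1}\gamma_{\sigma(j)}\in\mathbb Z$. Consequently, the set of critical values of $\Psi$ in $W=\mathbf{SU}_n/\mathrm{Ad}$ is a union of hyperplanes.
   Context: $F^*$ is a compact surface of genus $g\ge1$ with one boundary component, $\pi^*=\pi_1F^*$ free on $a_1,b_1,\dots,a_g,b_g$. $\widetilde\Psi:\mathrm{Hom}(\pi^*,\mathbf U_n)\cong\mathbf U_n^{2g}\to\mathbf{SU}_n$ is $\widetilde\Psi(A_1,B_1,\dots,A_g,B_g)=\prod_{i=1}^g[A_i,B_i]$, and $\Psi$ is the induced map on conjugacy classes. A representation $\rho$ is reducible if $\mathbb C^n$ has a proper nonzero $\rho(\pi^* )$-invariant subspace (equivalently, up to conjugacy $\mathrm{im}\rho\subset\mathbf U_{n_1}\times\mathbf U_{n_2}$ with $n_1+n_2=n$, $n_i\ge1$). The critical points of $\widetilde\Psi$ are exactly the reducible representations, and the critical values of $\Psi$ are the images of these. *)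

theory Defs
  imports "HOL-Analysis.Analysis"
begin

text \<open>n x n complex matrices are indexed by a finite type 'n, with n = CARD('n).\<close>

definition adjoint_mat :: "complex^'n^'n \<Rightarrow> complex^'n^'n" where
  "adjoint_mat U = (\<chi> i j. cnj (U $ j $ i))"

definition unitary_mat :: "complex^'n^'n \<Rightarrow> bool" where
  "unitary_mat U \<longleftrightarrow> U ** adjoint_mat U = mat 1 \<and> adjoint_mat U ** U = mat 1"

definition special_unitary_mat :: "complex^'n^'n \<Rightarrow> bool" where
  "special_unitary_mat U \<longleftrightarrow> unitary_mat U \<and> det U = 1"

definition unitarily_conjugate :: "complex^'n^'n \<Rightarrow> complex^'n^'n \<Rightarrow> bool" where
  "unitarily_conjugate X Y \<longleftrightarrow> (\<exists>P. unitary_mat P \<and> X = P ** Y ** adjoint_mat P)"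

text \<open>Group commutator [A,B] = A B A^{-1} B^{-1} (for unitary matrices the inverse is the adjoint).\<close>
definition commutator_mat :: "complex^'n^'n \<Rightarrow> complex^'n^'n \<Rightarrow> complex^'n^'n" where
  "commutator_mat A B = A ** B ** adjoint_mat A ** adjoint_mat B"

text \<open>Psi-tilde: ordered product [A_1,B_1] ... [A_g,B_g] (indices shifted to 0..g-1).\<close>
fun prod_commutators :: "nat \<Rightarrow> (nat \<Rightarrow> complex^'n^'n) \<Rightarrow> (nat \<Rightarrow> complex^'n^'n) \<Rightarrow> complex^'n^'n" where
  "prod_commutators 0 A B = mat 1"
| "prod_commutators (Suc k) A B = prod_commutators k A B ** commutator_mat (A k) (B k)"

text \<open>A homomorphism pi^* -> U_n: images of the free generators a_i, b_i (i < g).\<close>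
definition is_rep :: "nat \<Rightarrow> (nat \<Rightarrow> complex^'n^'n) \<Rightarrow> (nat \<Rightarrow> complex^'n^'n) \<Rightarrow> bool" where
  "is_rep g A B \<longleftrightarrow> (\<forall>i<g. unitary_mat (A i) \<and> unitary_mat (B i))"

definition complex_subspace :: "(complex^'n) set \<Rightarrow> bool" where
  "complex_subspace V \<longleftrightarrow> 0 \<in> V \<and> (\<forall>x\<in>V. \<forall>y\<in>V. x + y \<in> V) \<and> (\<forall>c. \<forall>x\<in>V. c *s x \<in> V)"

text \<open>Reducible: a proper nonzero subspace invariant under the image of pi^* (generated by the A_i, B_i).\<close>
definition reducible_rep :: "nat \<Rightarrow> (nat \<Rightarrow> complex^'n^'n) \<Rightarrow> (nat \<Rightarrow> complex^'n^'n) \<Rightarrow> bool" where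
  "reducible_rep g A B \<longleftrightarrow> (\<exists>V. complex_subspace V \<and> V \<noteq> {0} \<and> V \<noteq> UNIV \<and>
      (\<forall>i<g. \<forall>x\<in>V. A i *v x \<in> V \<and> B i *v x \<in> V))"

definition diag_exp :: "('n \<Rightarrow> real) \<Rightarrow> complex^'n^'n" where
  "diag_exp t = (\<chi> i j. if i = j then exp (2 * of_real pi * \<i> * of_real (t i)) else 0)"

end

theory Submission
  imports Defs
begin

lemma adj_mult: "adjoint_mat (X ** Y) = adjoint_mat Y ** adjoint_mat (X::complex^'n^'n)"
  by (simp add: adjoint_mat_def matrix_matrix_mult_def vec_eq_iff mult.commute)

lemma adj_adj[simp]: "adjoint_mat (adjoint_mat X) = X"
  by (simp add: adjoint_mat_def vec_eq_iff)

lemma adj_one[simp]: "adjoint_mat (mat 1 :: complex^'n^'n) = mat 1"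
  by (simp add: adjoint_mat_def mat_def vec_eq_iff)

lemma unitary_inj: "unitary_mat U \<Longrightarrow> U *v x = U *v y \<Longrightarrow> x = y"
  by (metis matrix_vector_mul_assoc matrix_vector_mul_lid unitary_mat_def)

lemma unitary_adj: "unitary_mat U \<Longrightarrow> unitary_mat (adjoint_mat U)"
  by (simp add: unitary_mat_def)

lemma unitary_mult: "unitary_mat U \<Longrightarrow> unitary_mat V \<Longrightarrow> unitary_mat (U ** V)"
  unfolding unitary_mat_def adj_mult
  by (metis matrix_mul_assoc matrix_mul_lid)

lemma csub_iff: "complex_subspace W \<longleftrightarrow> vec.subspace W"
  by (simp add: complex_subspace_def vec.subspace_def)

definition pres :: "(complex^'n) set \<Rightarrow> complex^'n^'n \<Rightarrow> bool" where
  "pres W X \<longleftrightarrow> (\<forall>x\<in>W. X *v x \<in> W)"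

lemma pres_mult: "pres W X \<Longrightarrow> pres W Y \<Longrightarrow> pres W (X ** Y)"
  by (simp add: pres_def flip: matrix_vector_mul_assoc)

lemma pres_one: "pres W (mat 1)"
  by (simp add: pres_def)

lemma pres_adj:
  assumes W: "complex_subspace W" and U: "unitary_mat U" and p: "pres W U"
  shows "pres W (adjoint_mat U)"
proof -
  have sW: "vec.subspace W" using W csub_iff by blast
  have inj: "inj ((*v) U)" using unitary_inj[OF U] by (auto simp: inj_def)
  have "vec.dim ((*v) U ` W) = vec.dim W"
    by (rule vec.dim_image_eq) (auto intro: inj_on_subset[OF inj] matrix_vector_mul_linear_gen)
  moreover have "vec.subspace ((*v) U ` W)"
    by (rule vec.subspace_image[OF sW])
  moreover have "(*v) U ` W \<subseteq> W" using p by (auto simp: pres_def)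
  ultimately have eq: "(*v) U ` W = W"
    using vec.subspace_dim_equal sW by (metis order_refl)
  show ?thesis unfolding pres_def
  proof
    fix x assume "x \<in> W"
    then obtain y where "y \<in> W" "x = U *v y" using eq by blast
    then show "adjoint_mat U *v x \<in> W" using U
      by (simp add: matrix_vector_mul_assoc unitary_mat_def)
  qed
qed

definition fdet :: "complex^'n^'n \<Rightarrow> complex^'n^'n \<Rightarrow> complex" where
  "fdet P X = det (X ** P + mat 1 - P)"

lemma fdet_mult:
  assumes PW: "\<forall>x. P *v x \<in> W" and PF: "\<forall>w\<in>W. P *v w = w" and Y: "pres W Y"
  shows "fdet P (X ** Y) = fdet P X * fdet P Y"
proof -
  have PP: "P *v (P *v v) = P *v v" for v using PW PF by blast
  have PY: "P *v (Y *v (P *v v)) = Y *v (P *v v)" for v using PW PF Y by (auto simp: pres_def)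
  have "(X ** P + mat 1 - P) ** (Y ** P + mat 1 - P) = X ** Y ** P + mat 1 - P"
  proof (subst matrix_eq, intro allI)
    fix v
    show "((X ** P + mat 1 - P) ** (Y ** P + mat 1 - P)) *v v = (X ** Y ** P + mat 1 - P) *v v"
      by (simp add: matrix_vector_mul_assoc[symmetric] matrix_vector_mult_add_rdistrib
            matrix_vector_mult_diff_rdistrib matrix_vector_right_distrib matrix_vector_mult_diff_distrib PP PY)
  qed
  then show ?thesis unfolding fdet_def by (metis det_mul)
qed

lemma fdet_one: "fdet P (mat 1) = 1"
  by (simp add: fdet_def)



lemma fdet_comm:
  assumes W: "complex_subspace W" and PW: "\<forall>x. P *v x \<in> W" and PF: "\<forall>w\<in>W. P *v w = w"
    and A: "unitary_mat A" "pres W A" and B: "unitary_mat B" "pres W B"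
  shows "fdet P (commutator_mat A B) = 1 \<and> pres W (commutator_mat A B)"
proof -
  have aA: "pres W (adjoint_mat A)" using pres_adj W A by blast
  have aB: "pres W (adjoint_mat B)" using pres_adj W B by blast
  have "fdet P (commutator_mat A B) = fdet P A * fdet P B * fdet P (adjoint_mat A) * fdet P (adjoint_mat B)"
    unfolding commutator_mat_def
    by (simp add: fdet_mult[OF PW PF] aA aB pres_mult A B)
  also have "\<dots> = (fdet P A * fdet P (adjoint_mat A)) * (fdet P B * fdet P (adjoint_mat B))"
    by (simp add: ac_simps)
  also have "fdet P A * fdet P (adjoint_mat A) = 1"
    using fdet_mult[OF PW PF aA, of A] A by (simp add: unitary_mat_def fdet_one)
  also have "fdet P B * fdet P (adjoint_mat B) = 1"
    using fdet_mult[OF PW PF aB, of B] B by (simp add: unitary_mat_def fdet_one)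
  finally show ?thesis
    unfolding commutator_mat_def using aA aB A B by (simp add: pres_mult)
qed

lemma fdet_prod:
  assumes W: "complex_subspace W" and PW: "\<forall>x. P *v x \<in> W" and PF: "\<forall>w\<in>W. P *v w = w"
    and AB: "\<forall>i<k. unitary_mat (A i) \<and> unitary_mat (B i) \<and> pres W (A i) \<and> pres W (B i)"
  shows "fdet P (prod_commutators k A B) = 1 \<and> pres W (prod_commutators k A B)"
  using AB
proof (induction k)
  case 0
  then show ?case by (simp add: fdet_one pres_one)
next
  case (Suc k)
  have c: "fdet P (commutator_mat (A k) (B k)) = 1 \<and> pres W (commutator_mat (A k) (B k))"
    using fdet_comm[OF W PW PF] Suc.prems by auto
  have "fdet P (prod_commutators k A B) = 1 \<and> pres W (prod_commutators k A B)"
    using Suc by auto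
  then show ?case using c by (simp add: fdet_mult[OF PW PF] pres_mult)
qed

lemma det_struct:
  fixes M :: "complex^'n^'n"
  assumes "\<And>i k. i \<noteq> k \<Longrightarrow> M$i$k \<noteq> 0 \<Longrightarrow> i \<notin> S \<and> k \<in> S"
  shows "det M = (\<Prod>i\<in>UNIV. M$i$i)"
proof -
  have z: "(\<Prod>i\<in>UNIV. M$i$p i) = 0" if p: "p permutes UNIV" "p \<noteq> id" for p
  proof -
    obtain i where i: "p i \<noteq> i" using p(2) by (metis eq_id_iff)
    show ?thesis
    proof (cases "M$i$p i = 0")
      case True then show ?thesis by (meson UNIV_I finite prod_zero)
    next
      case False
      then have "i \<notin> S" "p i \<in> S" using assms i by metis+
      moreover have "p (p i) \<noteq> p i" using i p(1) by (metis permutes_inj inj_eq)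
      ultimately have "M$(p i)$(p (p i)) = 0" using assms by metis
      then show ?thesis by (meson UNIV_I finite prod_zero)
    qed
  qed
  have "det M = (\<Sum>p\<in>{id}. of_int (sign p) * (\<Prod>i\<in>UNIV. M$i$p i))"
    unfolding det_def
    by (rule sum.mono_neutral_right) (auto simp: permutes_id z)
  then show ?thesis by (simp add: sign_id)
qed



lemma csub_sum:
  assumes W: "complex_subspace W" and v: "\<forall>k\<in>F. v k \<in> W"
  shows "(\<Sum>k\<in>F. c k *s v k) \<in> W"
  using W v unfolding csub_iff by (intro vec.subspace_sum) (auto intro: vec.subspace_scale)

lemma graph:
  fixes W :: "(complex^'n) set"
  assumes W: "complex_subspace W" and W0: "W \<noteq> {0}" and WU: "W \<noteq> UNIV"
  shows "\<exists>S P. S \<noteq> {} \<and> S \<noteq> UNIV \<and> (\<forall>x. P *v x \<in> W) \<and> (\<forall>w\<in>W. P *v w = w)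
     \<and> (\<forall>i k. k \<notin> S \<longrightarrow> P$i$k = 0) \<and> (\<forall>i\<in>S. \<forall>k\<in>S. P$i$k = (if i = k then 1 else 0))"
proof -
  have sW: "vec.subspace W" using W csub_iff by blast
  define good where "good S \<longleftrightarrow> (\<forall>x\<in>W. (\<forall>j\<in>S. x$j = 0) \<longrightarrow> x = 0)" for S :: "'n set"
  have gU: "good UNIV" by (auto simp: good_def vec_eq_iff)
  define m where "m = (LEAST m. \<exists>S. good S \<and> card S = m)"
  have "\<exists>S. good S \<and> card S = m" unfolding m_def by (rule LeastI_ex) (use gU in blast)
  then obtain S where gS: "good S" and cS: "card S = m" by blast
  have minS: "card S \<le> card S'" if "good S'" for S'
    unfolding cS m_def by (rule Least_le) (use that in blast)
  have "\<forall>j\<in>S. \<exists>v. v \<in> W \<and> (\<forall>k\<in>S. v$k = (if k = j then 1 else 0))"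
  proof
    fix j assume j: "j \<in> S"
    have "card (S - {j}) < card S" using j by (meson card_Diff1_less finite)
    then have "\<not> good (S - {j})" using minS by force
    then obtain x where x: "x \<in> W" "\<forall>k\<in>S - {j}. x$k = 0" "x \<noteq> 0" unfolding good_def by blast
    have xj: "x$j \<noteq> 0"
    proof
      assume "x$j = 0"
      then have "\<forall>k\<in>S. x$k = 0" using x(2) by blast
      then show False using gS x unfolding good_def by blast
    qed
    show "\<exists>v. v \<in> W \<and> (\<forall>k\<in>S. v$k = (if k = j then 1 else 0))"
      apply (rule exI[of _ "(1 / x$j) *s x"])
      using x xj W unfolding complex_subspace_def by (auto simp: field_simps)
  qed
  then obtain w where w: "\<forall>j\<in>S. w j \<in> W \<and> (\<forall>k\<in>S. w j $ k = (if k = j then 1 else 0))"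
    by metis
  define P :: "complex^'n^'n" where "P = (\<chi> i k. if k \<in> S then w k $ i else 0)"
  have Pv: "P *v x = (\<Sum>k\<in>S. x$k *s w k)" for x
  proof -
    have "(P *v x)$i = (\<Sum>k\<in>S. x$k * w k $ i)" for i
    proof -
      have "(P *v x)$i = (\<Sum>k\<in>UNIV. if k \<in> S then x$k * w k $ i else 0)"
        unfolding P_def matrix_vector_mult_def vec_lambda_beta by (rule sum.cong) auto
      also have "\<dots> = (\<Sum>k\<in>S. x$k * w k $ i)"
        by (simp add: sum.If_cases[OF finite])
      finally show ?thesis .
    qed
    then show ?thesis by (simp add: vec_eq_iff sum_component)
  qed
  have wW: "\<forall>k\<in>S. w k \<in> W" using w by blast
  have PW: "\<forall>x. P *v x \<in> W" unfolding Pv using csub_sum[OF W wW] by blast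
  have PF: "\<forall>v\<in>W. P *v v = v"
  proof
    fix v assume v: "v \<in> W"
    have "P *v v - v \<in> W" using PW v sW by (simp add: vec.subspace_diff)
    moreover have "(P *v v - v)$j = 0" if j: "j \<in> S" for j
    proof -
      have "(P *v v)$j = (\<Sum>k\<in>S. v$k * (if j = k then 1 else 0))"
        unfolding Pv sum_component using w j by (intro sum.cong) auto
      also have "\<dots> = v$j" using j by (simp add: if_distrib cong: if_cong)
      finally show ?thesis by simp
    qed
    ultimately have "P *v v - v = 0" using gS unfolding good_def by blast
    then show "P *v v = v" by simp
  qed
  have Sne: "S \<noteq> {}"
  proof
    assume "S = {}"
    then have "\<forall>x\<in>W. x = 0" using gS by (simp add: good_def)
    then show False using W0 W by (auto simp: complex_subspace_def)
  qed
  have SU: "S \<noteq> UNIV"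
  proof
    assume SU: "S = UNIV"
    have wa: "w j = axis j 1" for j using w SU by (auto simp: vec_eq_iff axis_def)
    have "x \<in> W" for x
    proof -
      have "(\<Sum>k\<in>UNIV. x$k *s w k) \<in> W" using csub_sum[OF W wW] SU by simp
      then show ?thesis using basis_expansion[of x] by (simp add: wa)
    qed
    then show False using WU by blast
  qed
  show ?thesis
    apply (rule exI[of _ S], rule exI[of _ P])
    using Sne SU PW PF w unfolding P_def by simp
qed



lemma det_diagP:
  fixes d :: "'n::finite \<Rightarrow> complex" and P :: "complex^'n^'n"
  assumes c1: "\<forall>i k. k \<notin> S \<longrightarrow> P$i$k = 0" and c2: "\<forall>i\<in>S. \<forall>k\<in>S. P$i$k = (if i = k then 1 else 0)"
  shows "det ((\<chi> i j. if i = j then d i else 0) ** P + mat 1 - P) = (\<Prod>i\<in>S. d i)"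
proof -
  define M where "M = (\<chi> i j. if i = j then d i else 0) ** P + mat 1 - P"
  have Me: "M$i$k = d i * P$i$k + (if i = k then 1 else 0) - P$i$k" for i k
  proof -
    have "(\<Sum>ka\<in>UNIV. (if i = ka then d i else 0) * P$ka$k) = (\<Sum>ka\<in>UNIV. if i = ka then d i * P$ka$k else 0)"
      by (rule sum.cong) auto
    also have "\<dots> = d i * P$i$k" by (simp add: sum.delta)
    finally show ?thesis unfolding M_def by (simp add: matrix_matrix_mult_def mat_def)
  qed
  have "det M = (\<Prod>i\<in>UNIV. M$i$i)"
  proof (rule det_struct[of M S])
    fix i k assume ik: "i \<noteq> k" "M$i$k \<noteq> 0"
    then have "P$i$k \<noteq> 0" using Me by auto
    then have kS: "k \<in> S" using c1 by blast
    then have "i \<notin> S" using c2 ik \<open>P$i$k \<noteq> 0\<close> by force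
    then show "i \<notin> S \<and> k \<in> S" using kS by blast
  qed
  also have "\<dots> = (\<Prod>i\<in>UNIV. if i \<in> S then d i else 1)"
    by (rule prod.cong) (auto simp: Me c1 c2)
  also have "\<dots> = (\<Prod>i\<in>S. d i)" by (simp add: prod.If_cases[OF finite])
  finally show ?thesis unfolding M_def .
qed

lemma exp_int: "exp (2 * of_real pi * \<i> * of_real x) = 1 \<longleftrightarrow> x \<in> \<int>"
proof
  assume "exp (2 * of_real pi * \<i> * of_real x) = 1"
  then obtain n :: int where "2 * pi * x = of_int (2 * n) * pi" by (auto simp: exp_eq_1)
  then have "x = of_int n" by simp
  then show "x \<in> \<int>" by simp
next
  assume "x \<in> \<int>"
  then obtain n :: int where "x = of_int n" by (auto elim: Ints_cases)
  then show "exp (2 * of_real pi * \<i> * of_real x) = 1" by (simp add: exp_eq_1)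
qed

lemma uvec1: "unitary_mat U \<Longrightarrow> adjoint_mat U *v (U *v y) = y"
  by (simp add: matrix_vector_mul_assoc unitary_mat_def)
lemma uvec2: "unitary_mat U \<Longrightarrow> U *v (adjoint_mat U *v y) = y"
  by (simp add: matrix_vector_mul_assoc unitary_mat_def)

lemma det_unitary_conj: "unitary_mat R \<Longrightarrow> det (adjoint_mat R ** M ** R) = det M"
proof -
  assume R: "unitary_mat R"
  have "det (adjoint_mat R ** M ** R) = det M * (det (adjoint_mat R) * det R)"
    by (simp add: det_mul)
  also have "det (adjoint_mat R) * det R = 1" using R by (metis det_I det_mul unitary_mat_def)
  finally show ?thesis by simp
qed

lemma forward:
  fixes t :: "'n::finite \<Rightarrow> real"
  assumes red: "reducible_rep g A B" and rep: "is_rep g A B"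
    and c1: "unitarily_conjugate \<gamma> (prod_commutators g A B)"
    and c2: "unitarily_conjugate \<gamma> (diag_exp t)"
  shows "\<exists>S :: 'n set. S \<noteq> {} \<and> S \<noteq> UNIV \<and> (\<Sum>j\<in>S. t j) \<in> \<int>"
proof -
  define C where "C = prod_commutators g A B"
  define D where "D = diag_exp t"
  obtain V where V: "complex_subspace V" "V \<noteq> {0}" "V \<noteq> UNIV"
    and pV: "\<forall>i<g. pres V (A i) \<and> pres V (B i)"
    using red unfolding reducible_rep_def pres_def by blast
  obtain P1 where P1: "unitary_mat P1" "\<gamma> = P1 ** C ** adjoint_mat P1"
    using c1 unfolding unitarily_conjugate_def C_def by blast
  obtain P2 where P2: "unitary_mat P2" "\<gamma> = P2 ** D ** adjoint_mat P2"
    using c2 unfolding unitarily_conjugate_def D_def by blast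
  define R where "R = adjoint_mat P2 ** P1"
  have R: "unitary_mat R" unfolding R_def by (intro unitary_mult unitary_adj P1 P2)
  have CR: "C = adjoint_mat R ** D ** R"
  proof (subst matrix_eq, intro allI)
    fix x
    have "P1 *v (C *v (adjoint_mat P1 *v y)) = P2 *v (D *v (adjoint_mat P2 *v y))" for y
      using P1(2) P2(2) by (metis matrix_vector_mul_assoc)
    from this[of "P1 *v x"] have
      "C *v x = adjoint_mat P1 *v (P2 *v (D *v (adjoint_mat P2 *v (P1 *v x))))"
      using P1(1) by (metis uvec1)
    then show "C *v x = (adjoint_mat R ** D ** R) *v x"
      unfolding R_def adj_mult by (simp add: matrix_vector_mul_assoc[symmetric])
  qed
  define W where "W = (*v) R ` V"
  have W: "complex_subspace W" using V(1) unfolding W_def csub_iff by (rule vec.subspace_image)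
  have W0: "W \<noteq> {0}"
  proof
    assume "W = {0}"
    then have "\<forall>v\<in>V. R *v v = R *v 0" unfolding W_def by auto
    then have "\<forall>v\<in>V. v = 0" using unitary_inj[OF R] by blast
    then show False using V(1,2) unfolding complex_subspace_def by blast
  qed
  have WU: "W \<noteq> UNIV"
  proof
    assume "W = UNIV"
    then have "\<forall>x. x \<in> V"
      unfolding W_def by (metis UNIV_I image_iff unitary_inj[OF R])
    then show False using V(3) by blast
  qed
  obtain S PW where S: "S \<noteq> {}" "S \<noteq> UNIV" and PWW: "\<forall>x. PW *v x \<in> W" and PWF: "\<forall>w\<in>W. PW *v w = w"
    and col1: "\<forall>i k. k \<notin> S \<longrightarrow> PW$i$k = 0" and col2: "\<forall>i\<in>S. \<forall>k\<in>S. PW$i$k = (if i = k then 1 else 0)"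
    using graph[OF W W0 WU] by blast
  define PV where "PV = adjoint_mat R ** PW ** R"
  have PVV: "\<forall>x. PV *v x \<in> V"
  proof
    fix x
    obtain v where "v \<in> V" "PW *v (R *v x) = R *v v" using PWW W_def by blast
    then show "PV *v x \<in> V" unfolding PV_def
      by (simp add: matrix_vector_mul_assoc[symmetric] uvec1[OF R])
  qed
  have PVF: "\<forall>v\<in>V. PV *v v = v"
  proof
    fix v assume "v \<in> V"
    then have "PW *v (R *v v) = R *v v" using PWF W_def by blast
    then show "PV *v v = v" unfolding PV_def
      by (simp add: matrix_vector_mul_assoc[symmetric] uvec1[OF R])
  qed
  have "fdet PV C = 1"
    unfolding C_def using fdet_prod[OF V(1) PVV PVF] rep pV unfolding is_rep_def by blast
  moreover have "C ** PV + mat 1 - PV = adjoint_mat R ** (D ** PW + mat 1 - PW) ** R"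
  proof (subst matrix_eq, intro allI)
    fix x
    show "(C ** PV + mat 1 - PV) *v x = (adjoint_mat R ** (D ** PW + mat 1 - PW) ** R) *v x"
      unfolding CR PV_def
      by (simp add: matrix_vector_mul_assoc[symmetric] matrix_vector_mult_add_rdistrib
            matrix_vector_mult_diff_rdistrib matrix_vector_right_distrib matrix_vector_mult_diff_distrib
            uvec1[OF R] uvec2[OF R])
  qed
  ultimately have "det (D ** PW + mat 1 - PW) = 1"
    unfolding fdet_def using det_unitary_conj[OF R] by metis
  then have "(\<Prod>i\<in>S. exp (2 * of_real pi * \<i> * of_real (t i))) = 1"
    using det_diagP[OF col1 col2, of "\<lambda>i. exp (2 * of_real pi * \<i> * of_real (t i))"]
    unfolding D_def diag_exp_def by simp
  then have "exp (2 * of_real pi * \<i> * of_real (\<Sum>i\<in>S. t i)) = 1"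
    by (simp add: exp_sum[symmetric] sum_distrib_left)
  then show ?thesis using S exp_int by blast
qed



lemma cycle:
  fixes t :: "'a \<Rightarrow> real"
  assumes T: "finite T" and sT: "(\<Sum>j\<in>T. t j) \<in> \<int>"
  shows "\<exists>\<tau> \<alpha>. (\<forall>j\<in>T. \<tau> j \<in> T) \<and> inj_on \<tau> T \<and> (\<forall>j\<in>T. \<alpha> j - \<alpha> (\<tau> j) - t j \<in> \<int>)"
proof -
  define m where "m = card T"
  obtain h where h: "bij_betw h {..<m} T"
    using ex_bij_betw_nat_finite[OF T] unfolding m_def atLeast0LessThan by blast
  define hi where "hi = inv_into {..<m} h"
  have hi1: "hi j < m" "h (hi j) = j" if "j \<in> T" for j
    using that h unfolding hi_def bij_betw_def
    by (auto intro: inv_into_into f_inv_into_f)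
  have hi2: "hi (h l) = l" if "l < m" for l
    using that h unfolding hi_def bij_betw_def by (auto intro: inv_into_f_f)
  define s where "s l = (if Suc l < m then Suc l else 0)" for l
  define \<tau> where "\<tau> j = h (s (hi j))" for j
  define \<alpha> where "\<alpha> j = - (\<Sum>i<hi j. t (h i))" for j
  have sm: "s l < m" if "l < m" for l using that by (simp add: s_def)
  have tT: "\<forall>j\<in>T. \<tau> j \<in> T"
    using hi1 sm h unfolding \<tau>_def bij_betw_def by blast
  have inj: "inj_on \<tau> T"
  proof
    fix x y assume xy: "x \<in> T" "y \<in> T" "\<tau> x = \<tau> y"
    then have "s (hi x) = s (hi y)"
      using h hi1 sm unfolding \<tau>_def bij_betw_def inj_on_def by (metis lessThan_iff)
    then have "hi x = hi y" using hi1(1)[OF xy(1)] hi1(1)[OF xy(2)] unfolding s_def by (auto split: if_splits)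
    then show "x = y" using hi1 xy by metis
  qed
  have sumT: "(\<Sum>i<m. t (h i)) = (\<Sum>j\<in>T. t j)"
    using sum.reindex_bij_betw[OF h] by blast
  have "\<forall>j\<in>T. \<alpha> j - \<alpha> (\<tau> j) - t j \<in> \<int>"
  proof
    fix j assume j: "j \<in> T"
    define l where "l = hi j"
    have l: "l < m" "h l = j" using hi1 j l_def by auto
    have ht: "hi (\<tau> j) = s l" unfolding \<tau>_def l_def[symmetric] using hi2 sm l by blast
    show "\<alpha> j - \<alpha> (\<tau> j) - t j \<in> \<int>"
    proof (cases "Suc l < m")
      case True
      then have "\<alpha> j - \<alpha> (\<tau> j) - t j = 0"
        unfolding \<alpha>_def ht l_def[symmetric] s_def using l by simp
      then show ?thesis by simp
    next
      case False
      then have m: "m = Suc l" using l by simp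
      have "\<alpha> j - \<alpha> (\<tau> j) - t j = - (\<Sum>i<m. t (h i))"
        unfolding \<alpha>_def ht l_def[symmetric] s_def using l False m by simp
      then show ?thesis using sumT sT by simp
    qed
  qed
  then show ?thesis using tT inj by blast
qed

lemma exp_cis: "exp (2 * of_real pi * \<i> * of_real x) = cis (2 * pi * x)"
  by (simp add: cis_conv_exp mult_ac)

lemma cis_int: "x \<in> \<int> \<Longrightarrow> cis (2 * pi * x) = 1"
  using exp_int exp_cis by metis

lemma diag_mv: "(\<chi> i j. if i = j then c i else 0) *v (x :: complex^'n) = (\<chi> i. c i * x$i)"
proof -
  have "(\<Sum>j\<in>UNIV. (if i = j then c i else 0) * x$j) = (\<Sum>j\<in>UNIV. if i = j then c i * x$j else 0)" for i
    by (rule sum.cong) auto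
  then show ?thesis by (simp add: matrix_vector_mult_def sum.delta vec_eq_iff)
qed

lemma perm_mv: "(\<chi> i j. if j = f i then 1 else 0) *v (x :: complex^'n) = (\<chi> i. x$(f i))"
proof -
  have "(\<Sum>j\<in>UNIV. (if j = f i then 1 else 0) * x$j) = (\<Sum>j\<in>UNIV. if j = f i then x$j else 0)" for i
    by (rule sum.cong) auto
  then show ?thesis by (simp add: matrix_vector_mult_def sum.delta' vec_eq_iff)
qed



lemma unitary_one: "unitary_mat (mat 1 :: complex^'n^'n)"
  by (simp add: unitary_mat_def)

lemma comm_one: "commutator_mat (mat 1) (mat 1 :: complex^'n^'n) = mat 1"
  by (simp add: commutator_mat_def)

lemma prod_single:
  "prod_commutators (Suc k) (\<lambda>n. if n = 0 then A0 else mat 1) (\<lambda>n. if n = 0 then B0 else mat 1)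
     = commutator_mat A0 (B0 :: complex^'n^'n)"
  by (induction k) (simp_all add: comm_one)

lemma backward:
  fixes t :: "'n::finite \<Rightarrow> real" and \<gamma> :: "complex^'n^'n"
  assumes g: "g \<ge> 1" and su: "special_unitary_mat \<gamma>" and c: "unitarily_conjugate \<gamma> (diag_exp t)"
    and S: "S \<noteq> {}" "S \<noteq> UNIV" "(\<Sum>j\<in>S. t j) \<in> \<int>"
  shows "\<exists>A B. is_rep g A B \<and> reducible_rep g A B \<and> unitarily_conjugate \<gamma> (prod_commutators g A B)"
proof -
  define D where "D = diag_exp t"
  obtain P where P: "unitary_mat P" "\<gamma> = P ** D ** adjoint_mat P"
    using c unfolding unitarily_conjugate_def D_def by blast
  have "det \<gamma> = det D"
    using det_unitary_conj[OF unitary_adj[OF P(1)], of D] P(2) by simp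
  also have "det D = (\<Prod>i\<in>UNIV. exp (2 * of_real pi * \<i> * of_real (t i)))"
    unfolding D_def diag_exp_def by (subst det_diagonal) auto
  also have "\<dots> = exp (2 * of_real pi * \<i> * of_real (\<Sum>i\<in>UNIV. t i))"
    by (simp add: exp_sum[symmetric] sum_distrib_left)
  finally have "(\<Sum>i\<in>UNIV. t i) \<in> \<int>" using su exp_int unfolding special_unitary_mat_def by metis
  moreover have "(\<Sum>i\<in>UNIV. t i) = (\<Sum>i\<in>-S. t i) + (\<Sum>i\<in>S. t i)"
    by (simp add: Compl_eq_Diff_UNIV sum.subset_diff[of S UNIV])
  ultimately have sC: "(\<Sum>i\<in>-S. t i) \<in> \<int>" using S(3)
    by (metis Ints_diff add_diff_cancel_right')
  obtain \<tau>1 \<alpha>1 where c1: "\<forall>j\<in>S. \<tau>1 j \<in> S" "inj_on \<tau>1 S" "\<forall>j\<in>S. \<alpha>1 j - \<alpha>1 (\<tau>1 j) - t j \<in> \<int>"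
    using cycle[OF finite S(3)] by blast
  obtain \<tau>2 \<alpha>2 where c2: "\<forall>j\<in>-S. \<tau>2 j \<in> -S" "inj_on \<tau>2 (-S)" "\<forall>j\<in>-S. \<alpha>2 j - \<alpha>2 (\<tau>2 j) - t j \<in> \<int>"
    using cycle[OF finite sC] by blast
  define \<tau> where "\<tau> j = (if j \<in> S then \<tau>1 j else \<tau>2 j)" for j
  define \<alpha> where "\<alpha> j = (if j \<in> S then \<alpha>1 j else \<alpha>2 j)" for j
  have \<tau>S: "\<tau> j \<in> S \<longleftrightarrow> j \<in> S" for j using c1 c2 unfolding \<tau>_def by auto
  have \<alpha>Z: "\<alpha> j - \<alpha> (\<tau> j) - t j \<in> \<int>" for j
    using c1 c2 \<tau>S unfolding \<alpha>_def by (cases "j \<in> S") (auto simp: \<tau>_def)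
  have inj: "inj \<tau>"
  proof
    fix x y assume xy: "\<tau> x = \<tau> y"
    then have "x \<in> S \<longleftrightarrow> y \<in> S" using \<tau>S by metis
    then show "x = y" using xy c1(2) c2(2) unfolding \<tau>_def inj_on_def
      by (cases "x \<in> S") auto
  qed
  have bij: "bij \<tau>" using inj finite_UNIV_inj_surj[OF finite inj] by (simp add: bij_def)
  define a where "a j = cis (2 * pi * \<alpha> j)" for j
  have acnj: "a i * cnj (a (\<tau> i)) = exp (2 * of_real pi * \<i> * of_real (t i))" for i
  proof -
    have "a i * cnj (a (\<tau> i)) = cis (2 * pi * t i + 2 * pi * (\<alpha> i - \<alpha> (\<tau> i) - t i))"
      unfolding a_def by (simp add: cis_cnj cis_mult algebra_simps)
    also have "\<dots> = cis (2 * pi * t i)"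
      using cis_int[OF \<alpha>Z[of i]] by (simp add: cis_mult[symmetric])
    finally show ?thesis by (simp add: exp_cis)
  qed
  have aa: "a i * cnj (a i) = 1" "cnj (a i) * a i = 1" for i
    unfolding a_def by (simp_all add: cis_cnj cis_mult)
  define A0 :: "complex^'n^'n" where "A0 = (\<chi> i j. if i = j then a i else 0)"
  define B0 :: "complex^'n^'n" where "B0 = (\<chi> i j. if j = \<tau> i then 1 else 0)"
  have adjA: "adjoint_mat A0 = (\<chi> i j. if i = j then cnj (a i) else 0)"
    unfolding A0_def adjoint_mat_def by (simp add: vec_eq_iff)
  have adjB: "adjoint_mat B0 = (\<chi> i j. if j = inv \<tau> i then 1 else 0)"
    unfolding B0_def adjoint_mat_def using bij by (auto simp: vec_eq_iff bij_inv_eq_iff)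
  have iv1: "inv \<tau> (\<tau> i) = i" for i using inj by (simp add: inv_f_f)
  have iv2: "\<tau> (inv \<tau> i) = i" for i using bij by (simp add: bij_is_surj surj_f_inv_f)
  have uA: "unitary_mat A0" unfolding unitary_mat_def adjA unfolding A0_def
    by (simp add: matrix_eq matrix_vector_mul_assoc[symmetric] diag_mv aa
         mult.assoc[symmetric] vec_eq_iff)
  have uB: "unitary_mat B0" unfolding unitary_mat_def adjB unfolding B0_def
    by (simp add: matrix_eq matrix_vector_mul_assoc[symmetric] perm_mv iv1 iv2 vec_eq_iff)
  have comm: "commutator_mat A0 B0 = diag_exp t"
    unfolding commutator_mat_def diag_exp_def adjA adjB unfolding A0_def B0_def
    by (simp add: matrix_eq matrix_vector_mul_assoc[symmetric] diag_mv perm_mv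
         iv1 mult.assoc[symmetric] acnj vec_eq_iff)
  define A where "A n = (if n = 0 then A0 else mat 1)" for n :: nat
  define B where "B n = (if n = 0 then B0 else mat 1)" for n :: nat
  have rep: "is_rep g A B" unfolding is_rep_def A_def B_def using uA uB by (simp add: unitary_one)
  define V where "V = {x :: complex^'n. \<forall>j. j \<notin> S \<longrightarrow> x$j = 0}"
  obtain j0 where j0: "j0 \<in> S" using S(1) by blast
  obtain k0 where k0: "k0 \<notin> S" using S(2) by blast
  have "reducible_rep g A B" unfolding reducible_rep_def
  proof (intro exI[of _ V] conjI)
    show "complex_subspace V" unfolding complex_subspace_def V_def by simp
    have "axis j0 1 \<in> V" "axis j0 (1::complex) \<noteq> 0" using j0 by (auto simp: V_def axis_def vec_eq_iff)
    then show "V \<noteq> {0}" by blast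
    have "axis k0 (1::complex) \<notin> V" using k0 by (auto simp: V_def axis_def)
    then show "V \<noteq> UNIV" by blast
    show "\<forall>i<g. \<forall>x\<in>V. A i *v x \<in> V \<and> B i *v x \<in> V"
      using \<tau>S by (auto simp: A_def B_def A0_def B0_def diag_mv perm_mv V_def)
  qed
  moreover have "prod_commutators g A B = diag_exp t"
  proof -
    obtain k where "g = Suc k" using g by (cases g) auto
    then show ?thesis unfolding A_def B_def using prod_single comm by metis
  qed
  ultimately show ?thesis using rep c by metis
qed


theorem mainTheorem4:
  fixes g :: nat and \<gamma> :: "complex^'n^'n" and t :: "'n \<Rightarrow> real"
  assumes "g \<ge> 1"
    and "special_unitary_mat \<gamma>"
    and "\<forall>j. 0 \<le> t j \<and> t j < 1"
    and "unitarily_conjugate \<gamma> (diag_exp t)"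
  shows "(\<exists>A B. is_rep g A B \<and> reducible_rep g A B \<and>
              unitarily_conjugate \<gamma> (prod_commutators g A B))
         \<longleftrightarrow> (\<exists>S :: 'n set. S \<noteq> {} \<and> S \<noteq> UNIV \<and> (\<Sum>j\<in>S. t j) \<in> \<int>)"
proof
  assume "\<exists>A B. is_rep g A B \<and> reducible_rep g A B \<and> unitarily_conjugate \<gamma> (prod_commutators g A B)"
  then obtain A B where "is_rep g A B" "reducible_rep g A B" "unitarily_conjugate \<gamma> (prod_commutators g A B)"
    by blast
  show "\<exists>S :: 'n set. S \<noteq> {} \<and> S \<noteq> UNIV \<and> (\<Sum>j\<in>S. t j) \<in> \<int>"
    by (rule forward[OF \<open>reducible_rep g A B\<close> \<open>is_rep g A B\<close> \<open>unitarily_conjugate \<gamma> (prod_commutators g A B)\<close> assms(4)])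
next
  assume "\<exists>S :: 'n set. S \<noteq> {} \<and> S \<noteq> UNIV \<and> (\<Sum>j\<in>S. t j) \<in> \<int>"
  then obtain S :: "'n set" where "S \<noteq> {}" "S \<noteq> UNIV" "(\<Sum>j\<in>S. t j) \<in> \<int>" by blast
  show "\<exists>A B. is_rep g A B \<and> reducible_rep g A B \<and> unitarily_conjugate \<gamma> (prod_commutators g A B)"
    by (rule backward[OF assms(1,2,4) \<open>S \<noteq> {}\<close> \<open>S \<noteq> UNIV\<close> \<open>(\<Sum>j\<in>S. t j) \<in> \<int>\<close>])
qed

end
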